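(* Let $m_0\in\mathbb N$ be such that for every $m\ge m_0$, every graph on $m+1$ vertices that has minimum degree at least $\lfloor 2m/3\rfloor$ and a vertex of degree $m$ contains every tree with $m$ edges as a subgraph. Let $k\ge m_0$, let $G$ be a graph on $n$ vertices with $n\ge k+1$, set $a:=n-k$, and let $S$ be the set of vertices of $G$ of degree at most $\frac{2k}{3}+a$, with $b:=|S|$. If some vertex $v$ of $G$ has degree at least $k+b$, then $G$ contains every tree with $k$ edges as a subgraph.
   Context: "Contains $T$ as a subgraph" means there is an injective map $V(T)\to V(G)$ sending edges of $T$ to edges of $G$. *)

theory Defs
  imports Complex_Main
begin

definition finite_graph :: "'a set \<Rightarrow> 'a set set \<Rightarrow> bool" where
  "finite_graph V E \<longleftrightarrow> finite V \<and>
     (\<forall>e\<in>E. \<exists>x y. x \<noteq> y \<and> x \<in> V \<and> y \<in> V \<and> e = {x, y})"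

definition degree :: "'a set \<Rightarrow> 'a set set \<Rightarrow> 'a \<Rightarrow> nat" where
  "degree V E v = card {u \<in> V. {u, v} \<in> E}"

definition graph_connected :: "'a set \<Rightarrow> 'a set set \<Rightarrow> bool" where
  "graph_connected V E \<longleftrightarrow>
     (\<forall>x\<in>V. \<forall>y\<in>V. (\<lambda>u w. {u, w} \<in> E)\<^sup>*\<^sup>* x y)"

definition is_cycle :: "'a set set \<Rightarrow> 'a list \<Rightarrow> bool" where
  "is_cycle E cs \<longleftrightarrow> length cs \<ge> 3 \<and> distinct cs \<and>
     (\<forall>i. Suc i < length cs \<longrightarrow> {cs ! i, cs ! Suc i} \<in> E) \<and>
     {last cs, hd cs} \<in> E"

definition acyclic_graph :: "'a set \<Rightarrow> 'a set set \<Rightarrow> bool" where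
  "acyclic_graph V E \<longleftrightarrow> (\<nexists>cs. set cs \<subseteq> V \<and> is_cycle E cs)"

definition is_tree :: "'a set \<Rightarrow> 'a set set \<Rightarrow> bool" where
  "is_tree V E \<longleftrightarrow> finite_graph V E \<and> V \<noteq> {} \<and> graph_connected V E \<and> acyclic_graph V E"

definition contains_subgraph :: "'a set \<Rightarrow> 'a set set \<Rightarrow> 'b set \<Rightarrow> 'b set set \<Rightarrow> bool" where
  "contains_subgraph V E TV TE \<longleftrightarrow>
     (\<exists>f. inj_on f TV \<and> f ` TV \<subseteq> V \<and> (\<forall>x y. {x, y} \<in> TE \<longrightarrow> {f x, f y} \<in> E))"

end

theory Submission imports Defs begin

lemma fg_edge: "finite_graph V E \<Longrightarrow> e \<in> E \<Longrightarrow> e \<subseteq> V"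
  unfolding finite_graph_def by fastforce

lemma fg_rename:
  assumes "inj_on g V" "finite_graph V E"
  shows "finite_graph (g ` V) ((`) g ` E)"
  unfolding finite_graph_def
proof (intro conjI ballI)
  show "finite (g ` V)" using assms(2) unfolding finite_graph_def by simp
next
  fix e' assume "e' \<in> (`) g ` E"
  then obtain e where e: "e \<in> E" "e' = g ` e" by blast
  then obtain x y where xy: "x \<noteq> y" "x \<in> V" "y \<in> V" "e = {x, y}"
    using assms(2) unfolding finite_graph_def by blast
  have "g x \<noteq> g y" using assms(1) xy unfolding inj_on_def by blast
  then show "\<exists>x y. x \<noteq> y \<and> x \<in> g ` V \<and> y \<in> g ` V \<and> e' = {x, y}"
    using xy e by auto
qed

lemma edge_rename_iff:
  assumes "inj_on g V" "finite_graph V E" "u \<in> V" "x \<in> V"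
  shows "{g u, g x} \<in> (`) g ` E \<longleftrightarrow> {u, x} \<in> E"
proof
  assume "{g u, g x} \<in> (`) g ` E"
  then obtain e where e: "e \<in> E" "g ` e = g ` {u, x}" by auto
  have "e \<subseteq> V" using fg_edge[OF assms(2) e(1)] .
  moreover have "{u, x} \<subseteq> V" using assms(3,4) by simp
  ultimately have "e = {u, x}" using e(2) inj_on_image_eq_iff[OF assms(1)] by metis
  then show "{u, x} \<in> E" using e by simp
next
  assume "{u, x} \<in> E" then show "{g u, g x} \<in> (`) g ` E"
    by (metis image_empty image_eqI image_insert)
qed

lemma degree_rename:
  assumes "inj_on g V" "finite_graph V E" "x \<in> V"
  shows "degree (g ` V) ((`) g ` E) (g x) = degree V E x"
proof -
  have "{u \<in> g ` V. {u, g x} \<in> (`) g ` E} = g ` {u \<in> V. {u, x} \<in> E}"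
  proof (rule set_eqI, rule iffI)
    fix w assume w: "w \<in> {u \<in> g ` V. {u, g x} \<in> (`) g ` E}"
    then obtain u where u: "u \<in> V" "w = g u" by auto
    with w have "{g u, g x} \<in> (`) g ` E" by simp
    then have "{u, x} \<in> E" using edge_rename_iff[OF assms(1,2) u(1) assms(3)] by simp
    then show "w \<in> g ` {u \<in> V. {u, x} \<in> E}" using u by (intro image_eqI[of _ _ u]) simp_all
  next
    fix w assume "w \<in> g ` {u \<in> V. {u, x} \<in> E}"
    then obtain u where u: "u \<in> V" "w = g u" "{u, x} \<in> E" by auto
    then have "{g u, g x} \<in> (`) g ` E" using edge_rename_iff[OF assms(1,2) u(1) assms(3)] by simp
    then show "w \<in> {u \<in> g ` V. {u, g x} \<in> (`) g ` E}" using u by simp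
  qed
  moreover have "inj_on g {u \<in> V. {u, x} \<in> E}" by (rule inj_on_subset[OF assms(1)]) auto
  ultimately show ?thesis unfolding degree_def by (simp add: card_image)
qed

lemma card_rename:
  assumes "inj_on g V" "finite_graph V E"
  shows "card ((`) g ` E) = card E"
proof -
  have "inj_on ((`) g) E"
  proof (rule inj_onI)
    fix a b assume "a \<in> E" "b \<in> E" "g ` a = g ` b"
    then show "a = b" using inj_on_image_eq_iff[OF assms(1) fg_edge[OF assms(2)] fg_edge[OF assms(2)]] by simp
  qed
  then show ?thesis by (simp add: card_image)
qed

lemma contains_back:
  assumes "inj_on g V" "finite_graph V E" "contains_subgraph (g ` V) ((`) g ` E) TV TE"
  shows "contains_subgraph V E TV TE"
proof -
  obtain f where f: "inj_on f TV" "f ` TV \<subseteq> g ` V" "\<forall>x y. {x, y} \<in> TE \<longrightarrow> {f x, f y} \<in> (`) g ` E"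
    using assms(3) unfolding contains_subgraph_def by blast
  define h where "h = inv_into V g \<circ> f"
  have i1: "inj_on (inv_into V g) (g ` V)" by (rule inj_on_inv_into) simp
  have i2: "inj_on (inv_into V g) (f ` TV)" by (rule inj_on_subset[OF i1 f(2)])
  have "inj_on h TV" unfolding h_def by (rule comp_inj_on[OF f(1) i2])
  moreover have "h ` TV \<subseteq> V"
  proof
    fix z assume "z \<in> h ` TV"
    then obtain t where t: "t \<in> TV" "z = inv_into V g (f t)" unfolding h_def by auto
    have "f t \<in> g ` V" using f(2) t(1) by blast
    then show "z \<in> V" using t(2) by (simp add: inv_into_into)
  qed
  moreover have "{h x, h y} \<in> E" if xyT: "{x, y} \<in> TE" for x y
  proof -
    obtain e where e: "e \<in> E" "{f x, f y} = g ` e" using f(3) xyT by blast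
    have "e \<subseteq> V" using fg_edge[OF assms(2) e(1)] .
    then have "inv_into V g ` g ` e = e" using assms(1) by (simp add: inv_into_image_cancel)
    then show ?thesis using e unfolding h_def by (metis comp_apply image_empty image_insert)
  qed
  ultimately show ?thesis unfolding contains_subgraph_def by blast
qed

lemma rtranclp_map:
  assumes "r\<^sup>*\<^sup>* x y" "\<And>a b. r a b \<Longrightarrow> s (f a) (f b)"
  shows "s\<^sup>*\<^sup>* (f x) (f y)"
  using assms(1) by induction (auto intro: rtranclp.rtrancl_into_rtrancl assms(2))

lemma tree_rename:
  assumes "inj_on g V" "is_tree V E"
  shows "is_tree (g ` V) ((`) g ` E)"
proof -
  have fg: "finite_graph V E" using assms(2) unfolding is_tree_def by simp
  have A: "finite_graph (g ` V) ((`) g ` E)" using fg_rename[OF assms(1) fg] .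
  have B: "g ` V \<noteq> {}" using assms(2) unfolding is_tree_def by simp
  have C: "graph_connected (g ` V) ((`) g ` E)"
    unfolding graph_connected_def
  proof (intro ballI)
    fix x' y' assume "x' \<in> g ` V" "y' \<in> g ` V"
    then obtain x y where xy: "x \<in> V" "y \<in> V" "x' = g x" "y' = g y" by blast
    have "(\<lambda>u w. {u, w} \<in> E)\<^sup>*\<^sup>* x y" using assms(2) xy unfolding is_tree_def graph_connected_def by blast
    then have "(\<lambda>u w. {u, w} \<in> (`) g ` E)\<^sup>*\<^sup>* (g x) (g y)"
      by (rule rtranclp_map) (metis image_empty image_eqI image_insert)
    then show "(\<lambda>u w. {u, w} \<in> (`) g ` E)\<^sup>*\<^sup>* x' y'" using xy by simp
  qed
  have D: "acyclic_graph (g ` V) ((`) g ` E)"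
    unfolding acyclic_graph_def
  proof
    assume "\<exists>cs. set cs \<subseteq> g ` V \<and> is_cycle ((`) g ` E) cs"
    then obtain cs where cs: "set cs \<subseteq> g ` V" "is_cycle ((`) g ` E) cs" by blast
    define h where "h = inv_into V g"
    define ds where "ds = map h cs"
    have hinj: "inj_on h (g ` V)" unfolding h_def by (rule inj_on_inv_into) simp
    have gh: "\<And>z. z \<in> g ` V \<Longrightarrow> g (h z) = z" unfolding h_def by (simp add: f_inv_into_f)
    have eb: "{h p, h q} \<in> E" if pq: "{p, q} \<in> (`) g ` E" for p q
    proof -
      obtain e where e: "e \<in> E" "{p, q} = g ` e" using pq by blast
      have "e \<subseteq> V" using fg_edge[OF fg e(1)] .
      then have "h ` g ` e = e" unfolding h_def using assms(1) by (simp add: inv_into_image_cancel)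
      then show ?thesis using e by (metis image_empty image_insert)
    qed
    have ne: "cs \<noteq> []" using cs(2) unfolding is_cycle_def by auto
    have "is_cycle E ds"
      unfolding is_cycle_def ds_def
    proof (intro conjI allI impI)
      show "3 \<le> length (map h cs)" using cs(2) unfolding is_cycle_def by simp
      show "distinct (map h cs)" using cs hinj unfolding is_cycle_def
        by (simp add: distinct_map inj_on_subset)
      fix i assume "Suc i < length (map h cs)"
      then show "{map h cs ! i, map h cs ! Suc i} \<in> E" using cs(2) eb unfolding is_cycle_def by simp
    next
      show "{last (map h cs), hd (map h cs)} \<in> E" using cs(2) eb ne unfolding is_cycle_def
        by (simp add: last_map hd_map)
    qed
    moreover have "set ds \<subseteq> V" unfolding ds_def h_def using cs(1) by (auto intro: inv_into_into)
    ultimately show False using assms(2) unfolding is_tree_def acyclic_graph_def by blast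
  qed
  show ?thesis using A B C D unfolding is_tree_def by blast
qed

lemma contains_tree_back:
  assumes "inj_on g TV" "contains_subgraph V E (g ` TV) ((`) g ` TE)"
  shows "contains_subgraph V E TV TE"
proof -
  obtain f where f: "inj_on f (g ` TV)" "f ` g ` TV \<subseteq> V"
     "\<forall>x y. {x, y} \<in> (`) g ` TE \<longrightarrow> {f x, f y} \<in> E"
    using assms(2) unfolding contains_subgraph_def by blast
  have "inj_on (f \<circ> g) TV" using f(1) assms(1) by (simp add: comp_inj_on)
  moreover have "(f \<circ> g) ` TV \<subseteq> V" using f(2) by (simp add: image_comp)
  moreover have "{(f \<circ> g) x, (f \<circ> g) y} \<in> E" if "{x, y} \<in> TE" for x y
  proof -
    have "{g x, g y} \<in> (`) g ` TE" using that by (metis image_empty image_eqI image_insert)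
    then show ?thesis using f(3) by simp
  qed
  ultimately show ?thesis unfolding contains_subgraph_def by blast
qed

theorem mainTheorem5:
  fixes m0 k :: nat and V :: "'a set" and E :: "'a set set"
  assumes hyp: "\<forall>m\<ge>m0. \<forall>(GV :: nat set) GE.
      finite_graph GV GE \<and> card GV = m + 1 \<and>
      (\<forall>v\<in>GV. degree GV GE v \<ge> (2 * m) div 3) \<and>
      (\<exists>v\<in>GV. degree GV GE v = m)
      \<longrightarrow> (\<forall>(TV :: nat set) TE. is_tree TV TE \<and> card TE = m
              \<longrightarrow> contains_subgraph GV GE TV TE)"
    and k: "k \<ge> m0"
    and G: "finite_graph V E"
    and n: "card V \<ge> k + 1"
    and v: "\<exists>v\<in>V. degree V E v \<ge> k + card {u \<in> V. real (degree V E u) \<le> 2 * real k / 3 + real (card V - k)}"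
  shows "\<forall>(TV :: 'b set) TE. is_tree TV TE \<and> card TE = k \<longrightarrow> contains_subgraph V E TV TE"
proof (intro allI impI)
  fix TV :: "'b set" and TE assume T: "is_tree TV TE \<and> card TE = k"
  define S where "S = {u \<in> V. real (degree V E u) \<le> 2 * real k / 3 + real (card V - k)}"
  obtain v where vV: "v \<in> V" and dv: "degree V E v \<ge> k + card S" using v unfolding S_def by blast
  have finV: "finite V" using G unfolding finite_graph_def by simp
  have noloop: "{x, x} \<notin> E" for x using G unfolding finite_graph_def
    by (metis doubleton_eq_iff)
  define N where "N = {u \<in> V. {u, v} \<in> E}"
  have fN: "finite ((N - S) \<union> S)" using finV unfolding N_def S_def by auto
  have "card N \<le> card ((N - S) \<union> S)" by (rule card_mono[OF fN]) blast
  also have "\<dots> \<le> card (N - S) + card S" by (rule card_Un_le)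
  finally have "card N \<le> card (N - S) + card S" .
  then have "k \<le> card (N - S)" using dv unfolding degree_def N_def by simp
  then obtain W where W: "W \<subseteq> N - S" "card W = k" "finite W" by (meson obtain_subset_with_card_n)
  have vW: "v \<notin> W" using W(1) noloop unfolding N_def by auto
  define W' where "W' = insert v W"
  have W'V: "W' \<subseteq> V" using W(1) vV unfolding W'_def N_def by auto
  have cW': "card W' = k + 1" using W vW unfolding W'_def by simp
  define E1 where "E1 = {e \<in> E. e \<subseteq> W'}"
  have fg1: "finite_graph W' E1" unfolding finite_graph_def
  proof (intro conjI ballI)
    show "finite W'" using finite_subset[OF W'V finV] .
  next
    fix e assume "e \<in> E1"
    then have e: "e \<in> E" "e \<subseteq> W'" unfolding E1_def by auto
    then obtain x y where "x \<noteq> y" "e = {x, y}" using G unfolding finite_graph_def by blast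
    then show "\<exists>x y. x \<noteq> y \<and> x \<in> W' \<and> y \<in> W' \<and> e = {x, y}" using e(2) by auto
  qed
  have deg1: "degree W' E1 x = card {u \<in> W'. {u, x} \<in> E}" if "x \<in> W'" for x
    unfolding degree_def E1_def using that by (intro arg_cong[where f=card]) auto
  have fW': "finite W'" using finite_subset[OF W'V finV] .
  have degv: "degree W' E1 v = k"
  proof -
    have "{u \<in> W'. {u, v} \<in> E} = W" using W(1) noloop unfolding W'_def N_def by auto
    then show ?thesis using deg1 W(2) unfolding W'_def by simp
  qed
  have degx: "2 * k div 3 \<le> degree W' E1 x" if "x \<in> W'" for x
  proof (cases "x = v")
    case True then show ?thesis using degv by simp
  next
    case False
    then have xW: "x \<in> W" using that unfolding W'_def by simp
    then have xS: "x \<in> V" "x \<notin> S" using W(1) unfolding N_def by auto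
    then have gt: "real (degree V E x) > 2 * real k / 3 + real (card V - k)" unfolding S_def by auto
    have sub: "{u \<in> V. {u, x} \<in> E} \<subseteq> {u \<in> W'. {u, x} \<in> E} \<union> (V - W')" by blast
    have "card (V - W') = card V - (k + 1)" using W'V fW' cW' by (simp add: card_Diff_subset)
    then have "degree V E x \<le> degree W' E1 x + (card V - (k + 1))"
    proof -
      have "card {u \<in> V. {u, x} \<in> E} \<le> card ({u \<in> W'. {u, x} \<in> E} \<union> (V - W'))"
        by (rule card_mono[OF _ sub]) (use finV fW' in auto)
      also have "\<dots> \<le> card {u \<in> W'. {u, x} \<in> E} + card (V - W')" by (rule card_Un_le)
      finally show ?thesis unfolding degree_def deg1[OF that, unfolded degree_def]
        using \<open>card (V - W') = card V - (k + 1)\<close> by simp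
    qed
    then have "real (degree V E x) \<le> real (degree W' E1 x) + real (card V) - real k - 1"
      using n by linarith
    then have "3 * real (degree W' E1 x) > 2 * real k" using gt n by linarith
    then have "3 * degree W' E1 x > 2 * k" by linarith
    then show ?thesis by linarith
  qed
  obtain h where h: "bij_betw h W' {0..<card W'}" using ex_bij_betw_finite_nat[OF fW'] by blast
  have hinj: "inj_on h W'" using h bij_betw_def by blast
  define GV where "GV = h ` W'"
  define GE where "GE = (`) h ` E1"
  have H1: "finite_graph GV GE" unfolding GV_def GE_def using fg_rename[OF hinj fg1] .
  have H2: "card GV = k + 1" unfolding GV_def using cW' hinj by (simp add: card_image)
  have H3: "\<forall>x\<in>GV. degree GV GE x \<ge> 2 * k div 3"
    unfolding GV_def GE_def using degree_rename[OF hinj fg1] degx by auto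
  have H4: "\<exists>x\<in>GV. degree GV GE x = k"
    unfolding GV_def GE_def using degree_rename[OF hinj fg1] degv W'_def by auto
  have fT: "finite_graph TV TE" using T unfolding is_tree_def by simp
  then have "finite TV" unfolding finite_graph_def by simp
  then obtain g where g: "bij_betw g TV {0..<card TV}" using ex_bij_betw_finite_nat by blast
  have ginj: "inj_on g TV" using g bij_betw_def by blast
  have T1: "is_tree (g ` TV) ((`) g ` TE)" using tree_rename[OF ginj] T by simp
  have T2: "card ((`) g ` TE) = k" using card_rename[OF ginj fT] T by simp
  have "contains_subgraph GV GE (g ` TV) ((`) g ` TE)"
  proof -
    have "\<forall>(TV :: nat set) TE. is_tree TV TE \<and> card TE = k \<longrightarrow> contains_subgraph GV GE TV TE"
      using hyp k H1 H2 H3 H4 by simp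
    then show ?thesis using T1 T2 by simp
  qed
  then have "contains_subgraph (h ` W') ((`) h ` E1) TV TE"
    using contains_tree_back[OF ginj] unfolding GV_def GE_def by simp
  then have "contains_subgraph W' E1 TV TE" by (rule contains_back[OF hinj fg1])
  then obtain f where f: "inj_on f TV" "f ` TV \<subseteq> W'" "\<forall>x y. {x, y} \<in> TE \<longrightarrow> {f x, f y} \<in> E1"
    unfolding contains_subgraph_def by blast
  have "f ` TV \<subseteq> V" using f(2) W'V by (rule subset_trans)
  moreover have "\<forall>x y. {x, y} \<in> TE \<longrightarrow> {f x, f y} \<in> E" using f(3) unfolding E1_def by simp
  ultimately show "contains_subgraph V E TV TE"
    unfolding contains_subgraph_def using f(1) by blast
qed

end
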